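(* Let $G$ be a finite connected multigraph without loops with $n$ vertices and $m$ edges, and $q\in V(G)$. Then $\dim S/\mathcal C_G^q=2m-n+1$, and the multiplicities satisfy $e(S/\mathcal C_G^q)=e(R/\mathcal C_G)=\kappa(G)$, the number of spanning trees of $G$.
   Context: $\mathbb E(G)$ is the set of oriented edges ($2m$ of them, head $e_+$, tail $e_-$), $\mathbb E(A,B)=\{e:e_+\in A,e_-\in B\}$; a connected cut is $\mathbb E(A,A^c)$ with $\emptyset\ne A\subsetneq V(G)$ and $G[A],G[A^c]$ connected. $S=k[y_e:e\in\mathbb E(G)]$, $R=k[x_e:e\in E(G)]$, standard $\mathbb Z$-grading. $\mathcal C_G^q$ is generated by $\prod_{e\in\mathbb E(A,A^c)}y_e$ over connected cuts with $q\in A^c$; $\mathcal C_G$ by the corresponding products of $x_{|e|}$ ($|e|$ the underlying edge). The multiplicity $e(M)$ of a graded module $M$ is the leading coefficient (normalized in the usual way, i.e. degree) of its Hilbert polynomial. *)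

theory Defs
  imports "HOL-Library.Poly_Mapping" "HOL-Computational_Algebra.Polynomial"
begin

type_synonym ('x, 'k) mpoly = "('x \<Rightarrow>\<^sub>0 nat) \<Rightarrow>\<^sub>0 'k"

definition var :: "'x \<Rightarrow> ('x, 'k::comm_semiring_1) mpoly" where
  "var x = Poly_Mapping.single (Poly_Mapping.single x 1) 1"

definition mdeg :: "('x \<Rightarrow>\<^sub>0 nat) \<Rightarrow> nat" where
  "mdeg mn = (\<Sum>x\<in>Poly_Mapping.keys mn. Poly_Mapping.lookup mn x)"

definition scal :: "'k::field \<Rightarrow> ('x, 'k) mpoly \<Rightarrow> ('x, 'k) mpoly" where
  "scal c p = Poly_Mapping.map (\<lambda>a. c * a) p"

definition homog :: "nat \<Rightarrow> ('x, 'k::field) mpoly set" where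
  "homog d = {p. \<forall>mn\<in>Poly_Mapping.keys p. mdeg mn = d}"

definition ideal_gen :: "('x, 'k::field) mpoly set \<Rightarrow> ('x, 'k) mpoly set" where
  "ideal_gen Gs = {\<Sum>g\<in>Gs. c g * g | c. True}"

text \<open>Hilbert function of S/I, I generated by Gs (homogeneous generators):
  dim_k (S/I)_d = dim_k S_d - dim_k I_d\<close>
definition hilb_fun :: "'k::field itself \<Rightarrow> ('x, 'k) mpoly set \<Rightarrow> nat \<Rightarrow> nat" where
  "hilb_fun K Gs d =
     vector_space.dim scal (homog d :: ('x, 'k) mpoly set)
     - vector_space.dim scal (homog d \<inter> ideal_gen Gs)"

definition samuel_poly :: "'k::field itself \<Rightarrow> ('x, 'k) mpoly set \<Rightarrow> real poly" where
  "samuel_poly K Gs =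
     (THE P. eventually (\<lambda>d. real (\<Sum>i\<le>d. hilb_fun K Gs i) = poly P (real d)) sequentially)"

text \<open>Dimension of S/I (degree of the Hilbert--Samuel polynomial, i.e. degree of
  the Hilbert polynomial plus one)\<close>
definition quot_dim :: "'k::field itself \<Rightarrow> ('x, 'k) mpoly set \<Rightarrow> nat" where
  "quot_dim K Gs = degree (samuel_poly K Gs)"

text \<open>Multiplicity e(S/I) = (dim)! times the leading coefficient of the
  Hilbert--Samuel polynomial (= (dim-1)! times leading coeff. of Hilbert polynomial)\<close>
definition multiplicity :: "'k::field itself \<Rightarrow> ('x, 'k) mpoly set \<Rightarrow> real" where
  "multiplicity K Gs = fact (quot_dim K Gs) * lead_coeff (samuel_poly K Gs)"

text \<open>Vertices: all elements of the finite type 'v; edges: all elements of the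
  finite type 'e; edge e has endpoints ends e = (u, v).
  Oriented edges are pairs (e, b); (e, True) has head fst (ends e), tail snd (ends e),
  (e, False) the reverse.\<close>

definition loopless :: "('e \<Rightarrow> 'v \<times> 'v) \<Rightarrow> bool" where
  "loopless ends \<longleftrightarrow> (\<forall>e. fst (ends e) \<noteq> snd (ends e))"

definition ohead :: "('e \<Rightarrow> 'v \<times> 'v) \<Rightarrow> 'e \<times> bool \<Rightarrow> 'v" where
  "ohead ends oe = (if snd oe then fst (ends (fst oe)) else snd (ends (fst oe)))"

definition otail :: "('e \<Rightarrow> 'v \<times> 'v) \<Rightarrow> 'e \<times> bool \<Rightarrow> 'v" where
  "otail ends oe = (if snd oe then snd (ends (fst oe)) else fst (ends (fst oe)))"

definition oedges_between :: "('e \<Rightarrow> 'v \<times> 'v) \<Rightarrow> 'v set \<Rightarrow> 'v set \<Rightarrow> ('e \<times> bool) set" where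
  "oedges_between ends A B = {oe. ohead ends oe \<in> A \<and> otail ends oe \<in> B}"

definition adj_in :: "('e \<Rightarrow> 'v \<times> 'v) \<Rightarrow> 'e set \<Rightarrow> 'v set \<Rightarrow> ('v \<times> 'v) set" where
  "adj_in ends F A = {(u, v). u \<in> A \<and> v \<in> A \<and>
      (\<exists>e\<in>F. ends e = (u, v) \<or> ends e = (v, u))}"

definition connected_on :: "('e \<Rightarrow> 'v \<times> 'v) \<Rightarrow> 'e set \<Rightarrow> 'v set \<Rightarrow> bool" where
  "connected_on ends F A \<longleftrightarrow> A \<noteq> {} \<and> (\<forall>u\<in>A. \<forall>v\<in>A. (u, v) \<in> (adj_in ends F A)\<^sup>*)"

definition graph_connected :: "('e \<Rightarrow> 'v \<times> 'v) \<Rightarrow> bool" where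
  "graph_connected ends \<longleftrightarrow> connected_on ends UNIV UNIV"

definition connected_cut_side :: "('e \<Rightarrow> 'v \<times> 'v) \<Rightarrow> 'v set \<Rightarrow> bool" where
  "connected_cut_side ends A \<longleftrightarrow> A \<noteq> {} \<and> A \<noteq> UNIV \<and>
      connected_on ends UNIV A \<and> connected_on ends UNIV (- A)"

definition cut_gens_oriented :: "('e \<Rightarrow> 'v \<times> 'v) \<Rightarrow> 'v \<Rightarrow> ('e \<times> bool, 'k::field) mpoly set" where
  "cut_gens_oriented ends q =
     {\<Prod>oe\<in>oedges_between ends A (- A). var oe | A. connected_cut_side ends A \<and> q \<in> - A}"

definition cut_gens :: "('e \<Rightarrow> 'v \<times> 'v) \<Rightarrow> 'v \<Rightarrow> ('e, 'k::field) mpoly set" where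
  "cut_gens ends q =
     {\<Prod>oe\<in>oedges_between ends A (- A). var (fst oe) | A. connected_cut_side ends A \<and> q \<in> - A}"

definition spanning_trees :: "('e \<Rightarrow> 'v::finite \<times> 'v) \<Rightarrow> 'e set set" where
  "spanning_trees ends = {T. card T = card (UNIV :: 'v set) - 1 \<and> connected_on ends T UNIV}"

end

theory Submission
  imports Defs
begin

lemma lookup_scal: "Poly_Mapping.lookup (scal c p) m = c * Poly_Mapping.lookup p m"
  by (simp add: scal_def map.rep_eq when_def)

lemma vs_scal: "vector_space (scal :: 'k::field \<Rightarrow> ('x, 'k) mpoly \<Rightarrow> ('x, 'k) mpoly)"
  by unfold_locales (auto intro!: poly_mapping_eqI simp: lookup_scal lookup_add algebra_simps)

interpretation V: vector_space "scal :: 'k::field \<Rightarrow> ('x, 'k) mpoly \<Rightarrow> ('x, 'k) mpoly"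
  by (rule vs_scal)

lemma inj_single1: "inj (\<lambda>mn. Poly_Mapping.single mn (1::'k::zero_neq_one))"
proof (rule injI)
  fix a b assume "Poly_Mapping.single a (1::'k) = Poly_Mapping.single b 1"
  then have "Poly_Mapping.lookup (Poly_Mapping.single a (1::'k)) a = Poly_Mapping.lookup (Poly_Mapping.single b 1) a"
    by simp
  then show "a = b" by (auto simp: lookup_single when_def split: if_splits)
qed

lemma poly_expand:
  fixes p :: "('x, 'k::field) mpoly"
  shows "p = (\<Sum>mn\<in>Poly_Mapping.keys p. scal (Poly_Mapping.lookup p mn) (Poly_Mapping.single mn 1))"
proof (rule poly_mapping_eqI)
  fix k
  show "Poly_Mapping.lookup p k = Poly_Mapping.lookup (\<Sum>mn\<in>Poly_Mapping.keys p. scal (Poly_Mapping.lookup p mn) (Poly_Mapping.single mn 1)) k"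
  proof -
    have "(\<Sum>x\<in>Poly_Mapping.keys p. Poly_Mapping.lookup p x * (if x = k then 1 else 0))
        = (\<Sum>x\<in>Poly_Mapping.keys p. if x = k then Poly_Mapping.lookup p x else 0)"
      by (rule sum.cong) auto
    then show ?thesis
      by (simp add: lookup_sum lookup_scal lookup_single when_def in_keys_iff)
  qed
qed

lemma dim_monos:
  fixes N :: "('x \<Rightarrow>\<^sub>0 nat) set" and W :: "('x, 'k::field) mpoly set"
  assumes fin: "finite N"
    and sub: "W \<subseteq> {p. Poly_Mapping.keys p \<subseteq> N}"
    and sup: "(\<lambda>mn. Poly_Mapping.single mn (1::'k)) ` N \<subseteq> W"
  shows "V.dim W = card N"
proof -
  define B where "B = (\<lambda>mn. Poly_Mapping.single mn (1::'k)) ` N"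
  have cB: "card B = card N"
    unfolding B_def by (rule card_image, rule inj_on_subset[OF inj_single1]) simp
  have span: "W \<subseteq> V.span B"
  proof
    fix p assume "p \<in> W"
    then have kp: "Poly_Mapping.keys p \<subseteq> N" using sub by auto
    have "(\<Sum>mn\<in>Poly_Mapping.keys p. scal (Poly_Mapping.lookup p mn) (Poly_Mapping.single mn 1)) \<in> V.span B"
      by (intro V.span_sum V.span_scale V.span_base) (use kp in \<open>auto simp: B_def\<close>)
    then show "p \<in> V.span B" using poly_expand[of p] by simp
  qed
  have ind: "V.independent B"
    unfolding V.independent_explicit_finite_subsets
  proof (intro allI impI ballI)
    fix S c v assume S: "S \<subseteq> B" "finite S" and h: "(\<Sum>v\<in>S. scal (c v) v) = 0" and v: "v \<in> S"
    define N' where "N' = {mn \<in> N. Poly_Mapping.single mn (1::'k) \<in> S}"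
    have SN: "S = (\<lambda>mn. Poly_Mapping.single mn (1::'k)) ` N'" using S(1) by (auto simp: N'_def B_def)
    have finN: "finite N'" using fin by (simp add: N'_def)
    from v SN obtain mn where mn: "mn \<in> N'" "v = Poly_Mapping.single mn 1" by auto
    have "(\<Sum>v\<in>S. scal (c v) v) = (\<Sum>m\<in>N'. scal (c (Poly_Mapping.single m 1)) (Poly_Mapping.single m 1))"
      unfolding SN by (rule sum.reindex_cong[OF inj_on_subset[OF inj_single1]]) auto
    then have "Poly_Mapping.lookup (\<Sum>m\<in>N'. scal (c (Poly_Mapping.single m 1)) (Poly_Mapping.single m (1::'k))) mn = 0"
      using h by simp
    then have "(\<Sum>m\<in>N'. c (Poly_Mapping.single m 1) * (1 when m = mn)) = 0"
      by (simp add: lookup_sum lookup_scal lookup_single)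
    moreover have "(\<Sum>m\<in>N'. c (Poly_Mapping.single m 1) * (1 when m = mn)) = c (Poly_Mapping.single mn 1)"
    proof -
      have "(\<Sum>m\<in>N'. c (Poly_Mapping.single m 1) * (1 when m = mn)) = (\<Sum>m\<in>N'. if m = mn then c (Poly_Mapping.single m 1) else 0)"
        by (rule sum.cong) (auto simp: when_def)
      then show ?thesis using finN mn(1) by simp
    qed
    ultimately show "c v = 0" using mn by simp
  qed
  show ?thesis
    by (rule V.dim_unique[of B]) (use sup span ind cB in \<open>auto simp: B_def\<close>)
qed

lemma mdeg_univ:
  fixes mn :: "'x::finite \<Rightarrow>\<^sub>0 nat"
  shows "mdeg mn = (\<Sum>x\<in>UNIV. Poly_Mapping.lookup mn x)"
  unfolding mdeg_def by (rule sum.mono_neutral_left) (auto simp: in_keys_iff)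

lemma mdeg_add: "mdeg (p + (q :: 'x::finite \<Rightarrow>\<^sub>0 nat)) = mdeg p + mdeg q"
  by (simp add: mdeg_univ lookup_add sum.distrib)

lemma mdeg_single: "mdeg (Poly_Mapping.single (x::'x::finite) a) = a"
  by (simp add: mdeg_univ lookup_single when_def)

lemma mdeg_zero: "mdeg (0 :: 'x::finite \<Rightarrow>\<^sub>0 nat) = 0"
  by (simp add: mdeg_univ)

lemma lookup_le_mdeg: "Poly_Mapping.lookup mn x \<le> mdeg (mn :: 'x::finite \<Rightarrow>\<^sub>0 nat)"
  unfolding mdeg_univ by (rule member_le_sum) auto

lemma finite_mdeg_le: "finite {mn :: 'x::finite \<Rightarrow>\<^sub>0 nat. mdeg mn \<le> d}"
proof -
  have "finite {f :: 'x \<Rightarrow> nat. \<forall>x. (x \<in> UNIV \<longrightarrow> f x \<in> {..d}) \<and> (x \<notin> UNIV \<longrightarrow> f x = 0)}"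
    by (rule finite_set_of_finite_funs) auto
  then have "finite (Poly_Mapping.lookup -` {f :: 'x \<Rightarrow> nat. \<forall>x. (x \<in> UNIV \<longrightarrow> f x \<in> {..d}) \<and> (x \<notin> UNIV \<longrightarrow> f x = 0)})"
    by (rule finite_vimageI) (metis injI poly_mapping.lookup_inject)
  moreover have "{mn :: 'x \<Rightarrow>\<^sub>0 nat. mdeg mn \<le> d} \<subseteq> Poly_Mapping.lookup -` {f :: 'x \<Rightarrow> nat. \<forall>x. (x \<in> UNIV \<longrightarrow> f x \<in> {..d}) \<and> (x \<notin> UNIV \<longrightarrow> f x = 0)}"
    using lookup_le_mdeg order_trans by fastforce
  ultimately show ?thesis by (rule finite_subset[rotated])
qed

lemma sum_shift_choose: "(\<Sum>a\<in>{1..d}. (d - a) choose k) = d choose Suc k"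
proof -
  have "(\<Sum>a\<in>{1..d}. (d - a) choose k) = (\<Sum>j\<in>{..<d}. j choose k)"
    by (rule sum.reindex_bij_witness[of _ "\<lambda>j. d - j" "\<lambda>a. d - a"]) auto
  also have "\<dots> = d choose Suc k"
  proof (cases d)
    case 0 then show ?thesis by simp
  next
    case (Suc n)
    then have "{..<d} = {..n}" by auto
    then show ?thesis using Suc sum_choose_upper[where n=n and m=k] by simp
  qed
  finally show ?thesis .
qed

lemma count_supp:
  fixes F :: "'x::finite set"
  shows "card {mn :: 'x \<Rightarrow>\<^sub>0 nat. Poly_Mapping.keys mn = F \<and> mdeg mn \<le> d} = d choose card F"
proof -
  have "finite F" by simp
  then show ?thesis
  proof (induction F arbitrary: d rule: finite_induct)
    case empty
    have "{mn :: 'x \<Rightarrow>\<^sub>0 nat. Poly_Mapping.keys mn = {} \<and> mdeg mn \<le> d} = {0}"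
      by (auto simp: mdeg_zero)
    then show ?case by simp
  next
    case (insert x F)
    define Y where "Y e = {mn :: 'x \<Rightarrow>\<^sub>0 nat. Poly_Mapping.keys mn = F \<and> mdeg mn \<le> e}" for e
    define f where "f = (\<lambda>(a::nat, mn'::'x \<Rightarrow>\<^sub>0 nat). mn' + Poly_Mapping.single x a)"
    have finY: "finite (Y e)" for e
      by (rule finite_subset[OF _ finite_mdeg_le[of e]]) (auto simp: Y_def)
    have eq: "{mn :: 'x \<Rightarrow>\<^sub>0 nat. Poly_Mapping.keys mn = insert x F \<and> mdeg mn \<le> d}
        = f ` (SIGMA a:{1..d}. Y (d - a))"
    proof (intro equalityI subsetI)
      fix mn assume "mn \<in> {mn :: 'x \<Rightarrow>\<^sub>0 nat. Poly_Mapping.keys mn = insert x F \<and> mdeg mn \<le> d}"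
      then have k: "Poly_Mapping.keys mn = insert x F" and dg: "mdeg mn \<le> d" by auto
      define a where "a = Poly_Mapping.lookup mn x"
      define mn' where "mn' = mn - Poly_Mapping.single x a"
      have "x \<in> Poly_Mapping.keys mn" using k by simp
      then have a1: "a \<ge> 1" unfolding in_keys_iff a_def by simp
      have ad: "a \<le> d" using lookup_le_mdeg[of mn x] dg by (simp add: a_def)
      have mnsum: "mn = mn' + Poly_Mapping.single x a"
        by (rule poly_mapping_eqI) (simp add: mn'_def lookup_add lookup_minus lookup_single when_def a_def)
      have k': "Poly_Mapping.keys mn' = F"
      proof -
        have "y \<in> Poly_Mapping.keys mn' \<longleftrightarrow> y \<in> F" for y
        proof (cases "y = x")
          case True
          then show ?thesis using insert.hyps(2) by (simp add: mn'_def in_keys_iff lookup_minus a_def)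
        next
          case False
          then have "Poly_Mapping.lookup mn' y = Poly_Mapping.lookup mn y"
            by (simp add: mn'_def lookup_minus lookup_single when_def)
          then have "y \<in> Poly_Mapping.keys mn' \<longleftrightarrow> y \<in> Poly_Mapping.keys mn" by (simp add: in_keys_iff)
          then show ?thesis using k False by simp
        qed
        then show ?thesis by auto
      qed
      have "mdeg mn = mdeg mn' + a" using mnsum by (simp add: mdeg_add mdeg_single)
      then have "mdeg mn' \<le> d - a" using dg by simp
      then have "(a, mn') \<in> (SIGMA a:{1..d}. Y (d - a))" using a1 ad k' by (auto simp: Y_def)
      then show "mn \<in> f ` (SIGMA a:{1..d}. Y (d - a))" using mnsum by (auto simp: f_def image_iff)
    next
      fix mn assume "mn \<in> f ` (SIGMA a:{1..d}. Y (d - a))"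
      then obtain a mn' where a: "1 \<le> a" "a \<le> d" and k': "Poly_Mapping.keys mn' = F" and dg: "mdeg mn' \<le> d - a"
        and mn: "mn = mn' + Poly_Mapping.single x a"
        by (auto simp: f_def Y_def)
      have "mdeg mn \<le> d" using mn dg a by (simp add: mdeg_add mdeg_single)
      moreover have "Poly_Mapping.keys mn = insert x F"
      proof -
        have "y \<in> Poly_Mapping.keys mn \<longleftrightarrow> y \<in> insert x F" for y
          using k' a insert.hyps(2)
          by (auto simp: mn in_keys_iff lookup_add lookup_single when_def split: if_splits)
        then show ?thesis by auto
      qed
      ultimately show "mn \<in> {mn :: 'x \<Rightarrow>\<^sub>0 nat. Poly_Mapping.keys mn = insert x F \<and> mdeg mn \<le> d}" by simp
    qed
    have inj: "inj_on f (SIGMA a:{1..d}. Y (d - a))"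
    proof (rule inj_onI)
      fix p1 p2 assume p1: "p1 \<in> (SIGMA a:{1..d}. Y (d - a))" and p2: "p2 \<in> (SIGMA a:{1..d}. Y (d - a))"
        and e: "f p1 = f p2"
      obtain a1 m1 a2 m2 where pp: "p1 = (a1, m1)" "p2 = (a2, m2)" by force
      have "x \<notin> Poly_Mapping.keys m1" "x \<notin> Poly_Mapping.keys m2"
        using p1 p2 insert.hyps(2) by (auto simp: pp Y_def)
      then have l: "Poly_Mapping.lookup m1 x = 0" "Poly_Mapping.lookup m2 x = 0" by (auto simp: in_keys_iff)
      have "Poly_Mapping.lookup (f p1) x = Poly_Mapping.lookup (f p2) x" using e by simp
      then have aa: "a1 = a2" using l by (simp add: pp f_def lookup_add)
      then have "m1 = m2" using e by (simp add: pp f_def)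
      then show "p1 = p2" using aa pp by simp
    qed
    have "card {mn :: 'x \<Rightarrow>\<^sub>0 nat. Poly_Mapping.keys mn = insert x F \<and> mdeg mn \<le> d}
        = card (SIGMA a:{1..d}. Y (d - a))"
      unfolding eq by (rule card_image[OF inj])
    also have "\<dots> = (\<Sum>a\<in>{1..d}. card (Y (d - a)))"
      using finY by simp
    also have "\<dots> = (\<Sum>a\<in>{1..d}. (d - a) choose card F)"
      using insert.IH by (simp add: Y_def)
    also have "\<dots> = d choose card (insert x F)"
      using insert.hyps sum_shift_choose by simp
    finally show ?case .
  qed
qed

definition sqmono :: "'x set \<Rightarrow> ('x \<Rightarrow>\<^sub>0 nat)" where
  "sqmono S = (\<Sum>x\<in>S. Poly_Mapping.single x 1)"

lemma lookup_sqmono: "finite S \<Longrightarrow> Poly_Mapping.lookup (sqmono S) y = (if y \<in> S then 1 else 0)"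
  by (simp add: sqmono_def lookup_sum lookup_single when_def)

lemma div_sqmono:
  assumes "finite S"
  shows "(\<exists>a. mn = a + sqmono S) \<longleftrightarrow> S \<subseteq> Poly_Mapping.keys mn"
proof
  assume "\<exists>a. mn = a + sqmono S"
  then obtain a where "mn = a + sqmono S" by blast
  then show "S \<subseteq> Poly_Mapping.keys mn" using assms by (auto simp: in_keys_iff lookup_add lookup_sqmono)
next
  assume h: "S \<subseteq> Poly_Mapping.keys mn"
  have "mn = (mn - sqmono S) + sqmono S"
  proof (rule poly_mapping_eqI)
    fix k
    show "Poly_Mapping.lookup mn k = Poly_Mapping.lookup (mn - sqmono S + sqmono S) k"
      using h assms by (auto simp: lookup_add lookup_minus lookup_sqmono in_keys_iff)
  qed
  then show "\<exists>a. mn = a + sqmono S" by blast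
qed

lemma ideal_keys:
  fixes Ms :: "('x \<Rightarrow>\<^sub>0 nat) set"
  assumes p: "p \<in> ideal_gen ((\<lambda>m. Poly_Mapping.single m (1::'k::field)) ` Ms)"
    and k: "k \<in> Poly_Mapping.keys p"
  shows "\<exists>m\<in>Ms. \<exists>a. k = a + m"
proof -
  obtain c where pc: "p = (\<Sum>g\<in>(\<lambda>m. Poly_Mapping.single m (1::'k)) ` Ms. c g * g)"
    using p by (auto simp: ideal_gen_def)
  have "k \<in> (\<Union>g\<in>(\<lambda>m. Poly_Mapping.single m (1::'k)) ` Ms. Poly_Mapping.keys (c g * g))"
    using k unfolding pc by (rule subsetD[OF keys_sum])
  then obtain g where g: "g \<in> (\<lambda>m. Poly_Mapping.single m (1::'k)) ` Ms" and kg: "k \<in> Poly_Mapping.keys (c g * g)"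
    by blast
  from g obtain m where m: "m \<in> Ms" "g = Poly_Mapping.single m 1" by blast
  have "k \<in> {a + b | a b. a \<in> Poly_Mapping.keys (c g) \<and> b \<in> Poly_Mapping.keys g}"
    using kg by (rule subsetD[OF keys_mult])
  then obtain a where "k = a + m" using m(2) by auto
  then show ?thesis using m(1) by blast
qed

lemma mono_in_ideal:
  fixes Ms :: "('x \<Rightarrow>\<^sub>0 nat) set"
  assumes fin: "finite Ms" and m: "m \<in> Ms"
  shows "Poly_Mapping.single (a + m) (1::'k::field) \<in> ideal_gen ((\<lambda>m. Poly_Mapping.single m (1::'k)) ` Ms)"
proof -
  define g where "g = Poly_Mapping.single m (1::'k)"
  define c where "c = (\<lambda>g'. if g' = g then Poly_Mapping.single a (1::'k) else 0)"
  have "(\<Sum>g'\<in>(\<lambda>m. Poly_Mapping.single m (1::'k)) ` Ms. c g' * g')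
      = (\<Sum>g'\<in>(\<lambda>m. Poly_Mapping.single m (1::'k)) ` Ms. if g' = g then Poly_Mapping.single a 1 * g else 0)"
    by (rule sum.cong) (auto simp: c_def)
  also have "\<dots> = Poly_Mapping.single a 1 * g"
  proof -
    have "g \<in> (\<lambda>m. Poly_Mapping.single m (1::'k)) ` Ms" using m by (simp add: g_def)
    then show ?thesis using fin by (subst sum.delta) auto
  qed
  also have "\<dots> = Poly_Mapping.single (a + m) 1"
    by (simp add: g_def mult_single)
  finally have e: "(\<Sum>g'\<in>(\<lambda>m. Poly_Mapping.single m (1::'k)) ` Ms. c g' * g') = Poly_Mapping.single (a + m) 1" .
  show ?thesis unfolding ideal_gen_def
    by (rule CollectI, rule exI[of _ c]) (simp add: e)
qed

lemma hilb_formula: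
  fixes Ms :: "('x::finite \<Rightarrow>\<^sub>0 nat) set"
  assumes fin: "finite Ms"
  shows "hilb_fun TYPE('k::field) ((\<lambda>m. Poly_Mapping.single m (1::'k)) ` Ms) i
     = card {mn. mdeg mn = i \<and> \<not> (\<exists>m\<in>Ms. \<exists>a. mn = a + m)}"
proof -
  let ?G = "(\<lambda>m. Poly_Mapping.single m (1::'k)) ` Ms"
  define N0 where "N0 = {mn :: 'x \<Rightarrow>\<^sub>0 nat. mdeg mn = i}"
  define N1 where "N1 = {mn \<in> N0. \<exists>m\<in>Ms. \<exists>a. mn = a + m}"
  have fin0: "finite N0" by (rule finite_subset[OF _ finite_mdeg_le[of i]]) (auto simp: N0_def)
  have d0: "V.dim (homog i :: ('x, 'k) mpoly set) = card N0"
  proof (rule dim_monos[OF fin0])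
    show "homog i \<subseteq> {p. Poly_Mapping.keys p \<subseteq> N0}" by (auto simp: homog_def N0_def)
    show "(\<lambda>mn. Poly_Mapping.single mn 1) ` N0 \<subseteq> (homog i :: ('x, 'k) mpoly set)"
      by (auto simp: homog_def N0_def)
  qed
  have d1: "V.dim (homog i \<inter> ideal_gen ?G) = card N1"
  proof (rule dim_monos)
    show "finite N1" using fin0 by (simp add: N1_def)
    show "homog i \<inter> ideal_gen ?G \<subseteq> {p. Poly_Mapping.keys p \<subseteq> N1}"
      using ideal_keys by (fastforce simp: homog_def N0_def N1_def)
    show "(\<lambda>mn. Poly_Mapping.single mn 1) ` N1 \<subseteq> homog i \<inter> ideal_gen ?G"
      using mono_in_ideal[OF fin] by (auto simp: homog_def N0_def N1_def)
  qed
  have "hilb_fun TYPE('k) ?G i = card N0 - card N1"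
    unfolding hilb_fun_def d0 d1 ..
  also have "\<dots> = card (N0 - N1)"
    by (rule card_Diff_subset[symmetric]) (use fin0 in \<open>auto simp: N1_def\<close>)
  also have "N0 - N1 = {mn. mdeg mn = i \<and> \<not> (\<exists>m\<in>Ms. \<exists>a. mn = a + m)}"
    by (auto simp: N0_def N1_def)
  finally show ?thesis .
qed

lemma samuel_sum:
  fixes SS :: "'x::finite set set"
  shows "(\<Sum>i\<le>d. hilb_fun TYPE('k::field) ((\<lambda>S. Poly_Mapping.single (sqmono S) (1::'k)) ` SS) i)
       = (\<Sum>F\<in>{F. \<forall>S\<in>SS. \<not> S \<subseteq> F}. d choose card F)"
proof -
  define Phi where "Phi = {F. \<forall>S\<in>SS. \<not> S \<subseteq> F}"
  have G: "(\<lambda>S. Poly_Mapping.single (sqmono S) (1::'k)) ` SS = (\<lambda>m. Poly_Mapping.single m 1) ` (sqmono ` SS)"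
    by (simp add: image_image)
  have cond: "(\<not> (\<exists>m\<in>sqmono ` SS. \<exists>a. mn = a + m)) \<longleftrightarrow> Poly_Mapping.keys mn \<in> Phi" for mn :: "'x \<Rightarrow>\<^sub>0 nat"
    using div_sqmono[of _ mn] by (auto simp: Phi_def)
  have h: "hilb_fun TYPE('k) ((\<lambda>S. Poly_Mapping.single (sqmono S) (1::'k)) ` SS) i
      = card {mn :: 'x \<Rightarrow>\<^sub>0 nat. mdeg mn = i \<and> Poly_Mapping.keys mn \<in> Phi}" for i
    unfolding G hilb_formula[of "sqmono ` SS", OF finite_imageI[OF finite]] cond ..
  have fin: "finite {mn :: 'x \<Rightarrow>\<^sub>0 nat. mdeg mn = i \<and> P mn}" for i P
    by (rule finite_subset[OF _ finite_mdeg_le[of i]]) auto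
  have "(\<Sum>i\<le>d. card {mn :: 'x \<Rightarrow>\<^sub>0 nat. mdeg mn = i \<and> Poly_Mapping.keys mn \<in> Phi})
      = card (\<Union>i\<in>{..d}. {mn :: 'x \<Rightarrow>\<^sub>0 nat. mdeg mn = i \<and> Poly_Mapping.keys mn \<in> Phi})"
    by (rule card_UN_disjoint[symmetric]) (auto simp: fin)
  also have "(\<Union>i\<in>{..d}. {mn :: 'x \<Rightarrow>\<^sub>0 nat. mdeg mn = i \<and> Poly_Mapping.keys mn \<in> Phi})
      = (\<Union>F\<in>Phi. {mn :: 'x \<Rightarrow>\<^sub>0 nat. Poly_Mapping.keys mn = F \<and> mdeg mn \<le> d})"
    by auto
  also have "card \<dots> = (\<Sum>F\<in>Phi. card {mn :: 'x \<Rightarrow>\<^sub>0 nat. Poly_Mapping.keys mn = F \<and> mdeg mn \<le> d})"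
    by (rule card_UN_disjoint) (auto intro: finite_subset[OF _ finite_mdeg_le[of d]])
  also have "\<dots> = (\<Sum>F\<in>Phi. d choose card F)"
    by (simp add: count_supp)
  finally show ?thesis unfolding h Phi_def .
qed

definition bpoly :: "nat \<Rightarrow> real poly" where
  "bpoly k = smult (1 / fact k) (\<Prod>i\<in>{0..<k}. [:- of_nat i, 1:])"

lemma poly_bpoly: "poly (bpoly k) (real d) = real (d choose k)"
  by (simp add: bpoly_def poly_prod binomial_gbinomial gbinomial_prod_rev)

lemma degree_bpoly: "degree (bpoly k) = k"
proof -
  have "degree (\<Prod>i\<in>{0..<k}. [:- of_nat i, 1::real:]) = (\<Sum>i\<in>{0..<k}. degree [:- of_nat i, 1::real:])"
    by (rule degree_prod_sum_eq) auto
  then show ?thesis by (simp add: bpoly_def)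
qed

lemma lead_bpoly: "coeff (bpoly k) k = 1 / fact k"
proof -
  have "lead_coeff (\<Prod>i\<in>{0..<k}. [:- of_nat i, 1::real:]) = 1"
    by (simp add: lead_coeff_prod)
  moreover have "degree (\<Prod>i\<in>{0..<k}. [:- of_nat i, 1::real:]) = k"
    using degree_bpoly[of k] by (simp add: bpoly_def)
  ultimately show ?thesis by (simp add: bpoly_def)
qed

lemma coeff_bpoly_high: "j > k \<Longrightarrow> coeff (bpoly k) j = 0"
  using degree_bpoly[of k] by (simp add: coeff_eq_0)

lemma the_poly:
  assumes "\<And>d. f d = poly P (real d)"
  shows "(THE P. eventually (\<lambda>d. f d = poly P (real d)) sequentially) = P"
proof (rule the_equality)
  show "eventually (\<lambda>d. f d = poly P (real d)) sequentially" using assms by simp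
next
  fix Q assume "eventually (\<lambda>d. f d = poly Q (real d)) sequentially"
  then obtain N where N: "\<And>d. d \<ge> N \<Longrightarrow> f d = poly Q (real d)" by (auto simp: eventually_sequentially)
  show "Q = P"
  proof (rule ccontr)
    assume "Q \<noteq> P"
    then have "P - Q \<noteq> 0" by simp
    then have "finite {x. poly (P - Q) x = 0}" by (rule poly_roots_finite)
    moreover have "real ` {N..} \<subseteq> {x. poly (P - Q) x = 0}"
      using N assms by auto
    moreover have "infinite (real ` {N..})"
      using infinite_Ici[of N] finite_imageD[of real "{N..}"] by (auto simp: inj_on_def)
    ultimately show False by (meson finite_subset)
  qed
qed

lemma samuel_main:
  fixes SS :: "'x::finite set set"
  assumes le: "\<And>F. F \<in> {F. \<forall>S\<in>SS. \<not> S \<subseteq> F} \<Longrightarrow> card F \<le> k"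
    and c: "c = card {F \<in> {F. \<forall>S\<in>SS. \<not> S \<subseteq> F}. card F = k}" and cpos: "c > 0"
  shows "quot_dim TYPE('k::field) ((\<lambda>S. Poly_Mapping.single (sqmono S) (1::'k)) ` SS) = k
       \<and> multiplicity TYPE('k) ((\<lambda>S. Poly_Mapping.single (sqmono S) (1::'k)) ` SS) = real c"
proof -
  define Phi where "Phi = {F. \<forall>S\<in>SS. \<not> S \<subseteq> F}"
  define Gs where "Gs = (\<lambda>S. Poly_Mapping.single (sqmono S) (1::'k)) ` SS"
  define P where "P = (\<Sum>F\<in>Phi. bpoly (card F))"
  have "real (\<Sum>i\<le>d. hilb_fun TYPE('k) Gs i) = poly P (real d)" for d
    unfolding Gs_def samuel_sum P_def Phi_def by (simp add: poly_sum poly_bpoly)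
  then have sp: "samuel_poly TYPE('k) Gs = P"
    unfolding samuel_poly_def by (rule the_poly)
  have hi: "coeff P j = 0" if "j > k" for j
    unfolding P_def coeff_sum using le that by (auto intro!: sum.neutral coeff_bpoly_high simp: Phi_def) (meson le_less_trans)
  have "coeff P k = (\<Sum>F\<in>Phi. if card F = k then 1 / fact k else 0)"
    unfolding P_def coeff_sum
  proof (rule sum.cong)
    fix F assume "F \<in> Phi"
    then have "card F \<le> k" using le by (simp add: Phi_def)
    then show "coeff (bpoly (card F)) k = (if card F = k then 1 / fact k else 0)"
      by (auto simp: lead_bpoly intro: coeff_bpoly_high)
  qed simp
  also have "\<dots> = (\<Sum>F\<in>{F\<in>Phi. card F = k}. 1 / fact k)"
    by (rule sum.mono_neutral_cong_right) auto
  also have "\<dots> = real c / fact k"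
    using c by (simp add: Phi_def)
  finally have ck: "coeff P k = real c / fact k" .
  then have "coeff P k \<noteq> 0" using cpos by simp
  then have dg: "degree P = k"
    using hi by (meson le_antisym le_degree degree_le leI)
  show ?thesis
    using dg ck cpos unfolding Gs_def[symmetric] quot_dim_def multiplicity_def sp by simp
qed

definition drel :: "('e \<Rightarrow> 'v \<times> 'v) \<Rightarrow> ('e \<times> bool) set \<Rightarrow> ('v \<times> 'v) set" where
  "drel ends C = {(otail ends oe, ohead ends oe) | oe. oe \<in> C}"

definition allreach :: "('e \<Rightarrow> 'v \<times> 'v) \<Rightarrow> 'v \<Rightarrow> ('e \<times> bool) set \<Rightarrow> bool" where
  "allreach ends q C \<longleftrightarrow> (\<forall>v. (q, v) \<in> (drel ends C)\<^sup>*)"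

definition dF :: "'e set \<Rightarrow> ('e \<times> bool) set" where
  "dF F = {oe. fst oe \<in> F}"

lemma ends_oe: "ends (fst oe) = (ohead ends oe, otail ends oe) \<or> ends (fst oe) = (otail ends oe, ohead ends oe)"
  by (cases oe) (auto simp: ohead_def otail_def)

lemma fst_eq_oe:
  assumes "fst oe1 = fst oe2"
  shows "(ohead ends oe1 = ohead ends oe2 \<and> otail ends oe1 = otail ends oe2 \<and> oe1 = oe2)
       \<or> (ohead ends oe1 = otail ends oe2 \<and> otail ends oe1 = ohead ends oe2)"
  using assms by (cases oe1; cases oe2) (auto simp: ohead_def otail_def)

lemma drel_dF: "drel ends (dF F) = adj_in ends F UNIV"
proof (intro equalityI subsetI)
  fix p assume "p \<in> drel ends (dF F)"
  then obtain oe where "fst oe \<in> F" "p = (otail ends oe, ohead ends oe)" by (auto simp: drel_def dF_def)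
  then show "p \<in> adj_in ends F UNIV" using ends_oe[of ends oe] by (auto simp: adj_in_def)
next
  fix p assume "p \<in> adj_in ends F UNIV"
  then obtain u v e where p: "p = (u, v)" "e \<in> F" "ends e = (u, v) \<or> ends e = (v, u)"
    by (auto simp: adj_in_def)
  show "p \<in> drel ends (dF F)"
  proof (cases "ends e = (v, u)")
    case True
    then have "(otail ends (e, True), ohead ends (e, True)) = (u, v)" by (simp add: ohead_def otail_def)
    then show ?thesis using p by (force simp: drel_def dF_def)
  next
    case False
    then have "ends e = (u, v)" using p by simp
    then have "(otail ends (e, False), ohead ends (e, False)) = (u, v)" by (simp add: ohead_def otail_def)
    then show ?thesis using p by (force simp: drel_def dF_def)
  qed
qed

lemma adj_in_sym: "(u, v) \<in> adj_in ends F A \<Longrightarrow> (v, u) \<in> adj_in ends F A"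
  by (auto simp: adj_in_def)

lemma adj_in_rtrancl_sym: "(u, v) \<in> (adj_in ends F A)\<^sup>* \<Longrightarrow> (v, u) \<in> (adj_in ends F A)\<^sup>*"
proof (induction rule: rtrancl_induct)
  case base then show ?case by simp
next
  case (step y z)
  have "(z, y) \<in> adj_in ends F A" using step.hyps(2) by (rule adj_in_sym)
  then show ?case using step.IH by (rule converse_rtrancl_into_rtrancl)
qed

lemma connected_iff_allreach:
  "connected_on ends F UNIV \<longleftrightarrow> allreach ends q (dF F)"
proof
  assume "connected_on ends F UNIV"
  then show "allreach ends q (dF F)" by (simp add: connected_on_def allreach_def drel_dF)
next
  assume "allreach ends q (dF F)"
  then have h: "(q, v) \<in> (adj_in ends F UNIV)\<^sup>*" for v by (simp add: allreach_def drel_dF)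
  show "connected_on ends F UNIV"
    unfolding connected_on_def
  proof (intro conjI ballI)
    fix u v
    have "(u, q) \<in> (adj_in ends F UNIV)\<^sup>*" using h[of u] by (rule adj_in_rtrancl_sym)
    then show "(u, v) \<in> (adj_in ends F UNIV)\<^sup>*" using h[of v] by (rule rtrancl_trans)
  qed simp
qed

lemma allreach_connected_fst:
  assumes "allreach ends q C"
  shows "connected_on ends (fst ` C) UNIV"
proof -
  have "drel ends C \<subseteq> drel ends (dF (fst ` C))"
  proof
    fix p assume "p \<in> drel ends C"
    then obtain oe where "oe \<in> C" "p = (otail ends oe, ohead ends oe)" by (auto simp: drel_def)
    then show "p \<in> drel ends (dF (fst ` C))" unfolding drel_def dF_def by blast
  qed
  then have m: "(drel ends C)\<^sup>* \<subseteq> (drel ends (dF (fst ` C)))\<^sup>*" by (rule rtrancl_mono)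
  have "allreach ends q (dF (fst ` C))" using assms m unfolding allreach_def by blast
  then show ?thesis using connected_iff_allreach[of ends "fst ` C" q] by simp
qed

lemma last_edge:
  assumes "(q, v) \<in> (drel ends C)\<^sup>*" "v \<noteq> q"
  shows "\<exists>oe\<in>C. ohead ends oe = v \<and> (q, otail ends oe) \<in> (drel ends C)\<^sup>*"
  using assms by (cases rule: rtranclE) (auto simp: drel_def)

lemma crossing_edge:
  assumes "(a, b) \<in> R\<^sup>*" "a \<notin> A" "b \<in> A"
  shows "\<exists>x y. (x, y) \<in> R \<and> x \<notin> A \<and> y \<in> A \<and> (a, x) \<in> R\<^sup>*"
  using assms
proof (induction rule: rtrancl_induct)
  case base then show ?case by simp
next
  case (step y z)
  show ?case
  proof (cases "y \<in> A")
    case True then show ?thesis using step by blast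
  next
    case False then show ?thesis using step by blast
  qed
qed

lemma allreach_card:
  fixes ends :: "'e::finite \<Rightarrow> 'v::finite \<times> 'v"
  assumes "allreach ends q C"
  shows "card (UNIV :: 'v set) - 1 \<le> card C"
proof -
  have ex: "\<forall>v\<in>-{q}. \<exists>oe. oe \<in> C \<and> ohead ends oe = v"
  proof
    fix v assume "v \<in> -{q}"
    then show "\<exists>oe. oe \<in> C \<and> ohead ends oe = v"
    proof -
      have r: "(q, v) \<in> (drel ends C)\<^sup>*" using assms by (simp add: allreach_def)
      have "v \<noteq> q" using \<open>v \<in> -{q}\<close> by simp
      then show ?thesis using last_edge[OF r] by blast
    qed
  qed
  obtain g where g: "\<forall>v\<in>-{q}. g v \<in> C \<and> ohead ends (g v) = v"
    using bchoice[OF ex] by blast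
  have inj: "inj_on g (-{q})"
  proof (rule inj_onI)
    fix x y assume "x \<in> -{q}" "y \<in> -{q}" "g x = g y"
    then show "x = y" using g by metis
  qed
  have "card (-{q}) = card (g ` (-{q}))" using inj by (simp add: card_image)
  also have "\<dots> \<le> card C" by (rule card_mono) (use g in auto)
  finally have "card (-{q}) \<le> card C" .
  moreover have "card (-{q}) = card (UNIV :: 'v set) - 1"
    using card_Diff_singleton[of q "UNIV :: 'v set"] by (simp add: Compl_eq_Diff_UNIV)
  ultimately show ?thesis by simp
qed

lemma bfs:
  fixes ends :: "'e::finite \<Rightarrow> 'v::finite \<times> 'v"
  assumes D: "allreach ends q D"
  shows "\<exists>C\<subseteq>D. card C = card (UNIV :: 'v set) - 1 \<and> inj_on fst C \<and> allreach ends q C"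
proof -
  let ?n = "card (UNIV :: 'v set)"
  have step: "\<exists>C R. C \<subseteq> D \<and> q \<in> R \<and> card R = Suc k \<and> card C = k \<and> inj_on fst C
      \<and> (\<forall>oe\<in>C. ohead ends oe \<in> R \<and> otail ends oe \<in> R) \<and> (\<forall>v\<in>R. (q, v) \<in> (drel ends C)\<^sup>*)"
    if "k < ?n" for k
    using that
  proof (induction k)
    case 0
    show ?case
      by (rule exI[of _ "{}"], rule exI[of _ "{q}"]) simp
  next
    case (Suc k)
    then obtain C R where CR: "C \<subseteq> D" "q \<in> R" "card R = Suc k" "card C = k" "inj_on fst C"
      "\<forall>oe\<in>C. ohead ends oe \<in> R \<and> otail ends oe \<in> R" "\<forall>v\<in>R. (q, v) \<in> (drel ends C)\<^sup>*"
      by auto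
    have "R \<noteq> UNIV" using CR(3) Suc.prems by auto
    then obtain v where v: "v \<notin> R" by auto
    have "(q, v) \<in> (drel ends D)\<^sup>*" using D by (simp add: allreach_def)
    then obtain x y where xy: "(x, y) \<in> drel ends D" "x \<notin> - R" "y \<in> - R"
      using crossing_edge[of q v "drel ends D" "- R"] CR(2) v by blast
    then obtain oe where oe: "oe \<in> D" "x = otail ends oe" "y = ohead ends oe"
      by (auto simp: drel_def)
    have xR: "otail ends oe \<in> R" and yR: "ohead ends oe \<notin> R" using xy oe by auto
    have oeC: "oe \<notin> C" using CR(6) yR by blast
    have fstC: "fst oe \<notin> fst ` C"
    proof
      assume "fst oe \<in> fst ` C"
      then obtain oe' where oe': "oe' \<in> C" "fst oe = fst oe'" by auto
      have "ohead ends oe' \<in> R" "otail ends oe' \<in> R" using CR(6) oe'(1) by auto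
      then show False using fst_eq_oe[OF oe'(2), of ends] yR by auto
    qed
    define C' where "C' = insert oe C"
    define R' where "R' = insert (ohead ends oe) R"
    have finC: "finite C" by simp
    have finR: "finite R" by simp
    have sub: "drel ends C \<subseteq> drel ends C'" by (auto simp: drel_def C'_def)
    have reach: "\<forall>w\<in>R'. (q, w) \<in> (drel ends C')\<^sup>*"
    proof
      fix w assume "w \<in> R'"
      then consider "w \<in> R" | "w = ohead ends oe" by (auto simp: R'_def)
      then show "(q, w) \<in> (drel ends C')\<^sup>*"
      proof cases
        case 1
        then have "(q, w) \<in> (drel ends C)\<^sup>*" using CR(7) by blast
        then show ?thesis using rtrancl_mono[OF sub] by blast
      next
        case 2
        have "(q, otail ends oe) \<in> (drel ends C)\<^sup>*" using CR(7) xR by blast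
        then have a: "(q, otail ends oe) \<in> (drel ends C')\<^sup>*" using rtrancl_mono[OF sub] by blast
        have "(otail ends oe, ohead ends oe) \<in> drel ends C'" unfolding drel_def C'_def by blast
        then show ?thesis using a 2 by (simp add: rtrancl_into_rtrancl)
      qed
    qed
    show ?case
    proof (rule exI[of _ C'], rule exI[of _ R'], intro conjI)
      show "C' \<subseteq> D" using CR(1) oe(1) by (simp add: C'_def)
      show "q \<in> R'" using CR(2) by (simp add: R'_def)
      show "card R' = Suc (Suc k)" using CR(3) yR finR by (simp add: R'_def)
      show "card C' = Suc k" using CR(4) oeC finC by (simp add: C'_def)
      show "inj_on fst C'" using CR(5) fstC oeC by (simp add: C'_def)
      show "\<forall>oe\<in>C'. ohead ends oe \<in> R' \<and> otail ends oe \<in> R'" using CR(6) xR by (auto simp: C'_def R'_def)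
      show "\<forall>v\<in>R'. (q, v) \<in> (drel ends C')\<^sup>*" by (rule reach)
    qed
  qed
  have n0: "?n > 0" by (rule finite_UNIV_card_ge_0) simp
  then obtain C R where CR: "C \<subseteq> D" "q \<in> R" "card R = ?n" "card C = ?n - 1" "inj_on fst C"
      "\<forall>v\<in>R. (q, v) \<in> (drel ends C)\<^sup>*"
    using step[of "?n - 1"] by auto
  have "R = UNIV" using CR(3) by (simp add: card_eq_UNIV_imp_eq_UNIV)
  then have "allreach ends q C" using CR(6) by (simp add: allreach_def)
  then show ?thesis using CR by blast
qed

lemma connected_card:
  fixes ends :: "'e::finite \<Rightarrow> 'v::finite \<times> 'v"
  assumes "connected_on ends F UNIV"
  shows "card (UNIV :: 'v set) - 1 \<le> card F"
proof -
  fix q :: 'v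
  have "allreach ends q (dF F)" using assms connected_iff_allreach[of ends F q] by simp
  then obtain C where C: "C \<subseteq> dF F" "card C = card (UNIV :: 'v set) - 1" "inj_on fst C"
    using bfs by blast
  have "card (fst ` C) = card C" using C(3) by (rule card_image)
  moreover have "fst ` C \<subseteq> F" using C(1) by (auto simp: dF_def)
  ultimately show ?thesis using C(2) card_mono[of F "fst ` C"] by simp
qed

lemma adj_in_mono: "A \<subseteq> B \<Longrightarrow> adj_in ends F A \<subseteq> adj_in ends F B"
  by (auto simp: adj_in_def)

lemma drel_adj:
  assumes "oe \<in> C" "otail ends oe \<in> A" "ohead ends oe \<in> A"
  shows "(otail ends oe, ohead ends oe) \<in> adj_in ends UNIV A"
  using assms ends_oe[of ends oe] unfolding adj_in_def by blast

lemma cut_hit_if: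
  assumes "allreach ends q C" "connected_cut_side ends A" "q \<in> - A"
  shows "C \<inter> oedges_between ends A (- A) \<noteq> {}"
proof -
  obtain v where v: "v \<in> A" using assms(2) by (auto simp: connected_cut_side_def)
  have "(q, v) \<in> (drel ends C)\<^sup>*" using assms(1) by (simp add: allreach_def)
  then obtain x y where "(x, y) \<in> drel ends C" "x \<notin> A" "y \<in> A"
    using crossing_edge[of q v "drel ends C" A] v assms(3) by blast
  then obtain oe where "oe \<in> C" "otail ends oe \<notin> A" "ohead ends oe \<in> A"
    by (auto simp: drel_def)
  then have "oe \<in> C \<inter> oedges_between ends A (- A)" by (simp add: oedges_between_def)
  then show ?thesis by blast
qed

lemma cut_hit_only_if:
  fixes ends :: "'e::finite \<Rightarrow> 'v::finite \<times> 'v"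
  assumes conn: "graph_connected ends"
    and hit: "\<And>A. connected_cut_side ends A \<Longrightarrow> q \<in> - A \<Longrightarrow> C \<inter> oedges_between ends A (- A) \<noteq> {}"
  shows "allreach ends q C"
proof (rule ccontr)
  assume na: "\<not> allreach ends q C"
  define R where "R = {v. (q, v) \<in> (drel ends C)\<^sup>*}"
  obtain v0 where v0: "v0 \<notin> R" using na by (auto simp: allreach_def R_def)
  have qR: "q \<in> R" by (simp add: R_def)
  define Aw where "Aw = adj_in ends UNIV (- R)"
  define L where "L = {w. (v0, w) \<in> Aw\<^sup>*}"
  have v0L: "v0 \<in> L" by (simp add: L_def)
  have LW: "w \<notin> R" if "w \<in> L" for w
  proof -
    have "(v0, w) \<in> Aw\<^sup>*" using that by (simp add: L_def)
    then show ?thesis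
    proof (induction rule: rtrancl_induct)
      case base then show ?case using v0 .
    next
      case (step y z) then show ?case by (auto simp: Aw_def adj_in_def)
    qed
  qed
  have qL: "q \<notin> L" using LW qR by blast
  have pathL: "(x, y) \<in> (adj_in ends UNIV L)\<^sup>*" if "(x, y) \<in> Aw\<^sup>*" "x \<in> L" for x y
    using that
  proof (induction rule: rtrancl_induct)
    case base then show ?case by simp
  next
    case (step y z)
    have "(v0, x) \<in> Aw\<^sup>*" using step.prems by (simp add: L_def)
    then have yL: "y \<in> L" using step.hyps(1) unfolding L_def by simp
    have zL: "z \<in> L" using yL step.hyps(2) unfolding L_def by simp
    have "(y, z) \<in> adj_in ends UNIV L" using step.hyps(2) yL zL by (auto simp: Aw_def adj_in_def)
    then show ?case using step.IH step.prems by simp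
  qed
  have Aw_sym: "(x, y) \<in> Aw\<^sup>* \<Longrightarrow> (y, x) \<in> Aw\<^sup>*" for x y
    unfolding Aw_def by (rule adj_in_rtrancl_sym)
  have connL: "connected_on ends UNIV L"
    unfolding connected_on_def
  proof (intro conjI ballI)
    show "L \<noteq> {}" using v0L by blast
    fix u w assume u: "u \<in> L" and w: "w \<in> L"
    have "(u, v0) \<in> Aw\<^sup>*" using u Aw_sym by (simp add: L_def)
    moreover have "(v0, w) \<in> Aw\<^sup>*" using w by (simp add: L_def)
    ultimately have "(u, w) \<in> Aw\<^sup>*" by simp
    then show "(u, w) \<in> (adj_in ends UNIV L)\<^sup>*" using pathL u by blast
  qed
  have closure: "w \<in> L" if "u \<in> L" "w \<notin> R" "(u, w) \<in> adj_in ends UNIV UNIV" for u w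
  proof -
    have "u \<notin> R" using LW that(1) by blast
    then have "(u, w) \<in> Aw" using that(2,3) by (auto simp: Aw_def adj_in_def)
    then show ?thesis using that(1) by (simp add: L_def)
  qed
  have Rpath: "(q, x) \<in> (adj_in ends UNIV R)\<^sup>*" if "(q, x) \<in> (drel ends C)\<^sup>*" for x
    using that
  proof (induction rule: rtrancl_induct)
    case base then show ?case by simp
  next
    case (step y z)
    obtain oe where oe: "oe \<in> C" "y = otail ends oe" "z = ohead ends oe"
      using step.hyps(2) by (auto simp: drel_def)
    have "y \<in> R" "z \<in> R" using step.hyps by (auto simp: R_def)
    then have "(y, z) \<in> adj_in ends UNIV R" using drel_adj[of oe C ends R] oe by simp
    then show ?case using step.IH by simp
  qed
  have RL: "adj_in ends UNIV R \<subseteq> adj_in ends UNIV (- L)"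
    by (rule adj_in_mono) (use LW in blast)
  have toq: "(x, q) \<in> (adj_in ends UNIV (- L))\<^sup>*" if "x \<notin> L" for x
  proof -
    have "(x, q) \<in> (adj_in ends UNIV UNIV)\<^sup>*" using conn by (simp add: graph_connected_def connected_on_def)
    then show ?thesis using that
    proof (induction rule: converse_rtrancl_induct)
      case base then show ?case by simp
    next
      case (step x y)
      show ?case
      proof (cases "x \<in> R")
        case True
        then have "(q, x) \<in> (adj_in ends UNIV R)\<^sup>*" using Rpath by (simp add: R_def)
        then have "(q, x) \<in> (adj_in ends UNIV (- L))\<^sup>*" using rtrancl_mono[OF RL] by blast
        then show ?thesis by (rule adj_in_rtrancl_sym)
      next
        case False
        have yL: "y \<notin> L"
        proof
          assume "y \<in> L"
          moreover have "(y, x) \<in> adj_in ends UNIV UNIV" using step.hyps(1) by (rule adj_in_sym)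
          ultimately have "x \<in> L" using closure False by blast
          then show False using step.prems by simp
        qed
        have "(x, y) \<in> adj_in ends UNIV (- L)" using step.hyps(1) yL step.prems by (auto simp: adj_in_def)
        moreover have "(y, q) \<in> (adj_in ends UNIV (- L))\<^sup>*" using step.IH yL by simp
        ultimately show ?thesis by (rule converse_rtrancl_into_rtrancl)
      qed
    qed
  qed
  have connNL: "connected_on ends UNIV (- L)"
    unfolding connected_on_def
  proof (intro conjI ballI)
    show "- L \<noteq> {}" using qL by blast
    fix u w assume u: "u \<in> - L" and w: "w \<in> - L"
    have "(u, q) \<in> (adj_in ends UNIV (- L))\<^sup>*" using u toq by simp
    moreover have "(q, w) \<in> (adj_in ends UNIV (- L))\<^sup>*" using w toq[of w] adj_in_rtrancl_sym by simp
    ultimately show "(u, w) \<in> (adj_in ends UNIV (- L))\<^sup>*" by simp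
  qed
  have ccs: "connected_cut_side ends L"
    unfolding connected_cut_side_def using connL connNL v0L qL by blast
  have empty: "C \<inter> oedges_between ends L (- L) = {}"
  proof (rule ccontr)
    assume "C \<inter> oedges_between ends L (- L) \<noteq> {}"
    then obtain oe where oe: "oe \<in> C" "ohead ends oe \<in> L" "otail ends oe \<notin> L"
      by (auto simp: oedges_between_def)
    show False
    proof (cases "otail ends oe \<in> R")
      case True
      then have "(q, otail ends oe) \<in> (drel ends C)\<^sup>*" by (simp add: R_def)
      moreover have "(otail ends oe, ohead ends oe) \<in> drel ends C" using oe(1) unfolding drel_def by blast
      ultimately have "ohead ends oe \<in> R" unfolding R_def by simp
      then show False using LW oe(2) by blast
    next
      case False
      have "(ohead ends oe, otail ends oe) \<in> adj_in ends UNIV UNIV"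
        using ends_oe[of ends oe] unfolding adj_in_def by blast
      then have "otail ends oe \<in> L" using closure oe(2) False by blast
      then show False using oe(3) by simp
    qed
  qed
  show False using hit[OF ccs] qL empty by simp
qed

lemma arb_inj_fst:
  fixes ends :: "'e::finite \<Rightarrow> 'v::finite \<times> 'v"
  assumes a: "allreach ends q C" and c: "card C = card (UNIV :: 'v set) - 1"
  shows "inj_on fst C"
proof -
  have "card (UNIV :: 'v set) - 1 \<le> card (fst ` C)"
    by (rule connected_card[OF allreach_connected_fst[OF a]])
  moreover have "card (fst ` C) \<le> card C" by (rule card_image_le) simp
  ultimately have "card (fst ` C) = card C" using c by simp
  then show ?thesis by (rule eq_card_imp_inj_on[rotated]) simp
qed

lemma split_reach:
  assumes a: "allreach ends q C" and x: "x \<in> C" and inj: "inj_on fst C"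
  shows "(q, v) \<in> (adj_in ends (fst ` C - {fst x}) UNIV)\<^sup>* \<or> (ohead ends x, v) \<in> (adj_in ends (fst ` C - {fst x}) UNIV)\<^sup>*"
proof -
  let ?U = "adj_in ends (fst ` C - {fst x}) UNIV"
  have "(q, v) \<in> (drel ends C)\<^sup>*" using a by (simp add: allreach_def)
  then show ?thesis
  proof (induction rule: rtrancl_induct)
    case base then show ?case by simp
  next
    case (step y z)
    obtain oe where oe: "oe \<in> C" "y = otail ends oe" "z = ohead ends oe"
      using step.hyps(2) by (auto simp: drel_def)
    show ?case
    proof (cases "oe = x")
      case True
      then show ?thesis using oe by simp
    next
      case False
      then have "fst oe \<noteq> fst x" using inj oe(1) x by (auto dest: inj_onD)
      then have "fst oe \<in> fst ` C - {fst x}" using oe(1) by simp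
      then have "(y, z) \<in> ?U" using oe ends_oe[of ends oe] unfolding adj_in_def by blast
      then show ?thesis using step.IH by (meson rtrancl.rtrancl_into_rtrancl)
    qed
  qed
qed

lemma arb_eq:
  fixes ends :: "'e::finite \<Rightarrow> 'v::finite \<times> 'v"
  assumes a1: "allreach ends q C1" and c1: "card C1 = card (UNIV :: 'v set) - 1"
    and a2: "allreach ends q C2" and c2: "card C2 = card (UNIV :: 'v set) - 1"
    and f: "fst ` C1 = fst ` C2"
  shows "C1 = C2"
proof -
  have inj1: "inj_on fst C1" using arb_inj_fst[OF a1 c1] .
  have inj2: "inj_on fst C2" using arb_inj_fst[OF a2 c2] .
  have sub: "C1 \<subseteq> C2"
  proof
    fix oe assume oe: "oe \<in> C1"
    show "oe \<in> C2"
    proof (rule ccontr)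
      assume nC2: "oe \<notin> C2"
      have "fst oe \<in> fst ` C2" using oe f by blast
      then obtain oe' where oe': "oe' \<in> C2" "fst oe' = fst oe" by auto
      have ne: "oe' \<noteq> oe" using oe'(1) nC2 by blast
      have ht: "ohead ends oe' = otail ends oe" "otail ends oe' = ohead ends oe"
        using fst_eq_oe[OF oe'(2), of ends] ne by auto
      define T where "T = fst ` C1"
      define e where "e = fst oe"
      define U where "U = adj_in ends (T - {e}) UNIV"
      have eT: "e \<in> T" using oe by (simp add: T_def e_def)
      have cT: "card T = card (UNIV :: 'v set) - 1" using c1 inj1 by (simp add: T_def card_image)
      have T2: "fst ` C2 - {fst oe'} = T - {e}" using f oe'(2) by (simp add: T_def e_def)
      have s1: "(q, v) \<in> U\<^sup>* \<or> (ohead ends oe, v) \<in> U\<^sup>*" for v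
        using split_reach[OF a1 oe inj1, of v] by (simp add: U_def T_def e_def)
      have s2: "(q, v) \<in> U\<^sup>* \<or> (otail ends oe, v) \<in> U\<^sup>*" for v
        using split_reach[OF a2 oe'(1) inj2, of v] T2 ht by (simp add: U_def)
      have notconn: False if "\<forall>v. (q, v) \<in> U\<^sup>*"
      proof -
        have "connected_on ends (T - {e}) UNIV"
          unfolding connected_on_def
        proof (intro conjI ballI)
          fix u w
          have "(q, u) \<in> U\<^sup>*" using that by blast
          then have "(u, q) \<in> U\<^sup>*" unfolding U_def by (rule adj_in_rtrancl_sym)
          moreover have "(q, w) \<in> U\<^sup>*" using that by blast
          ultimately show "(u, w) \<in> (adj_in ends (T - {e}) UNIV)\<^sup>*" unfolding U_def by simp
        qed simp
        then have "card (UNIV :: 'v set) - 1 \<le> card (T - {e})" by (rule connected_card)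
        moreover have "card (T - {e}) = card T - 1" using eT by simp
        moreover have "card T \<ge> 1"
        proof -
          have "T \<noteq> {}" using eT by blast
          then have "0 < card T" by (simp add: card_gt_0_iff)
          then show ?thesis by simp
        qed
        ultimately show False using cT by simp
      qed
      have nh: "(q, ohead ends oe) \<notin> U\<^sup>*"
      proof
        assume h: "(q, ohead ends oe) \<in> U\<^sup>*"
        have "\<forall>v. (q, v) \<in> U\<^sup>*"
        proof
          fix v show "(q, v) \<in> U\<^sup>*" using s1[of v] h by (meson rtrancl_trans)
        qed
        then show False by (rule notconn)
      qed
      have nt: "(q, otail ends oe) \<notin> U\<^sup>*"
      proof
        assume h: "(q, otail ends oe) \<in> U\<^sup>*"
        have "\<forall>v. (q, v) \<in> U\<^sup>*"
        proof
          fix v show "(q, v) \<in> U\<^sup>*" using s2[of v] h by (meson rtrancl_trans)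
        qed
        then show False by (rule notconn)
      qed
      have "connected_on ends T UNIV" unfolding T_def by (rule allreach_connected_fst[OF a1])
      then have "(q, ohead ends oe) \<in> (adj_in ends T UNIV)\<^sup>*" by (simp add: connected_on_def)
      then have "(q, ohead ends oe) \<in> U\<^sup>*"
      proof (induction rule: rtrancl_induct)
        case base then show ?case by simp
      next
        case (step y z)
        obtain e2 where e2: "e2 \<in> T" "ends e2 = (y, z) \<or> ends e2 = (z, y)"
          using step.hyps(2) by (auto simp: adj_in_def)
        show ?case
        proof (cases "e2 = e")
          case True
          then have "y = ohead ends oe \<or> y = otail ends oe"
            using e2(2) ends_oe[of ends oe] by (auto simp: e_def)
          then show ?thesis using step.IH nh nt by blast
        next
          case False
          then have "(y, z) \<in> U" using e2 by (auto simp: U_def adj_in_def)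
          then show ?thesis using step.IH by (meson rtrancl.rtrancl_into_rtrancl)
        qed
      qed
      then show False using nh by blast
    qed
  qed
  show ?thesis by (rule card_subset_eq) (use sub c1 c2 in auto)
qed

lemma prod_var:
  fixes f :: "'a \<Rightarrow> 'x"
  assumes "finite S"
  shows "(\<Prod>x\<in>S. (var (f x) :: ('x, 'k::field) mpoly)) = Poly_Mapping.single (\<Sum>x\<in>S. Poly_Mapping.single (f x) 1) 1"
  using assms
proof (induction S rule: finite_induct)
  case empty then show ?case by simp
next
  case (insert x S)
  then show ?case by (simp add: var_def mult_single)
qed

lemma inj_fst_cut: "inj_on fst (oedges_between ends A (- A))"
proof (rule inj_onI)
  fix a b assume a: "a \<in> oedges_between ends A (- A)" and b: "b \<in> oedges_between ends A (- A)"
    and e: "fst a = fst b"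
  show "a = b"
    using fst_eq_oe[OF e, of ends] a b by (auto simp: oedges_between_def)
qed

lemma gens_oriented:
  fixes ends :: "'e::finite \<Rightarrow> 'v \<times> 'v"
  shows "cut_gens_oriented ends q = (\<lambda>S. Poly_Mapping.single (sqmono S) (1::'k::field)) `
     {oedges_between ends A (- A) | A. connected_cut_side ends A \<and> q \<in> - A}"
proof -
  have e1: "cut_gens_oriented ends q = (\<lambda>S. (\<Prod>oe\<in>S. (var oe :: ('e \<times> bool, 'k) mpoly))) `
     {oedges_between ends A (- A) | A. connected_cut_side ends A \<and> q \<in> - A}"
    unfolding cut_gens_oriented_def by blast
  have "(\<Prod>oe\<in>S. (var oe :: ('e \<times> bool, 'k) mpoly)) = Poly_Mapping.single (sqmono S) 1" for S :: "('e \<times> bool) set"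
    using prod_var[of S "\<lambda>x. x"] by (simp add: sqmono_def)
  then show ?thesis unfolding e1 by simp
qed

lemma gens_unoriented:
  fixes ends :: "'e::finite \<Rightarrow> 'v \<times> 'v"
  shows "cut_gens ends q = (\<lambda>S. Poly_Mapping.single (sqmono S) (1::'k::field)) `
     {fst ` oedges_between ends A (- A) | A. connected_cut_side ends A \<and> q \<in> - A}"
proof -
  have e1: "cut_gens ends q = (\<lambda>S. (\<Prod>oe\<in>S. (var (fst oe) :: ('e, 'k) mpoly))) `
     {oedges_between ends A (- A) | A. connected_cut_side ends A \<and> q \<in> - A}"
    unfolding cut_gens_def by blast
  have e2: "{fst ` oedges_between ends A (- A) | A. connected_cut_side ends A \<and> q \<in> - A}
     = (\<lambda>S. fst ` S) ` {oedges_between ends A (- A) | A. connected_cut_side ends A \<and> q \<in> - A}"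
    by blast
  have eq: "(\<Prod>oe\<in>oedges_between ends A (- A). (var (fst oe) :: ('e, 'k) mpoly))
      = Poly_Mapping.single (sqmono (fst ` oedges_between ends A (- A))) 1" for A
  proof -
    have "(\<Sum>x\<in>oedges_between ends A (- A). Poly_Mapping.single (fst x) (1::nat))
        = sqmono (fst ` oedges_between ends A (- A))"
      unfolding sqmono_def by (rule sum.reindex[OF inj_fst_cut, symmetric, unfolded comp_def])
    then show ?thesis using prod_var[of "oedges_between ends A (- A)" fst] by simp
  qed
  have e3: "cut_gens ends q = (\<lambda>S. Poly_Mapping.single (sqmono (fst ` S)) (1::'k)) `
     {oedges_between ends A (- A) | A. connected_cut_side ends A \<and> q \<in> - A}"
    unfolding e1 by (rule image_cong[OF refl]) (auto simp: eq)
  show ?thesis unfolding e3 e2 image_image ..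
qed

lemma card_compl_fin: "card (- (F :: 'a::finite set)) = card (UNIV :: 'a set) - card F"
  using card_Diff_subset[of F "UNIV :: 'a set"] by (simp add: Compl_eq_Diff_UNIV)

lemma faces_oriented:
  fixes ends :: "'e::finite \<Rightarrow> 'v::finite \<times> 'v"
  assumes conn: "graph_connected ends"
  shows "(\<forall>S\<in>{oedges_between ends A (- A) | A. connected_cut_side ends A \<and> q \<in> - A}. \<not> S \<subseteq> F)
     \<longleftrightarrow> allreach ends q (- F)"
proof
  assume h: "\<forall>S\<in>{oedges_between ends A (- A) | A. connected_cut_side ends A \<and> q \<in> - A}. \<not> S \<subseteq> F"
  show "allreach ends q (- F)"
  proof (rule cut_hit_only_if[OF conn])
    fix A assume "connected_cut_side ends A" "q \<in> - A"
    then have "\<not> oedges_between ends A (- A) \<subseteq> F" using h by blast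
    then show "- F \<inter> oedges_between ends A (- A) \<noteq> {}" by blast
  qed
next
  assume h: "allreach ends q (- F)"
  show "\<forall>S\<in>{oedges_between ends A (- A) | A. connected_cut_side ends A \<and> q \<in> - A}. \<not> S \<subseteq> F"
  proof (intro ballI)
    fix S assume "S \<in> {oedges_between ends A (- A) | A. connected_cut_side ends A \<and> q \<in> - A}"
    then obtain A where A: "S = oedges_between ends A (- A)" "connected_cut_side ends A" "q \<in> - A" by blast
    have "- F \<inter> oedges_between ends A (- A) \<noteq> {}" by (rule cut_hit_if[OF h A(2,3)])
    then show "\<not> S \<subseteq> F" using A(1) by blast
  qed
qed

lemma faces_unoriented:
  fixes ends :: "'e::finite \<Rightarrow> 'v::finite \<times> 'v"
  assumes conn: "graph_connected ends"
  shows "(\<forall>S\<in>{fst ` oedges_between ends A (- A) | A. connected_cut_side ends A \<and> q \<in> - A}. \<not> S \<subseteq> F)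
     \<longleftrightarrow> connected_on ends (- F) UNIV"
proof -
  have "(\<forall>S\<in>{fst ` oedges_between ends A (- A) | A. connected_cut_side ends A \<and> q \<in> - A}. \<not> S \<subseteq> F)
     \<longleftrightarrow> (\<forall>S\<in>{oedges_between ends A (- A) | A. connected_cut_side ends A \<and> q \<in> - A}. \<not> S \<subseteq> - dF (- F))"
    by (auto simp: dF_def)
  also have "\<dots> \<longleftrightarrow> allreach ends q (- (- dF (- F)))" by (rule faces_oriented[OF conn])
  also have "\<dots> \<longleftrightarrow> connected_on ends (- F) UNIV" using connected_iff_allreach[of ends "- F" q] by simp
  finally show ?thesis .
qed

lemma arb_trees:
  fixes ends :: "'e::finite \<Rightarrow> 'v::finite \<times> 'v"
  shows "card {C. allreach ends q C \<and> card C = card (UNIV :: 'v set) - 1} = card (spanning_trees ends)"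
proof -
  let ?n = "card (UNIV :: 'v set)"
  let ?Arb = "{C. allreach ends q C \<and> card C = ?n - 1}"
  have inj: "inj_on (\<lambda>C. fst ` C) ?Arb"
    by (rule inj_onI) (use arb_eq in blast)
  have img: "(\<lambda>C. fst ` C) ` ?Arb = spanning_trees ends"
  proof (intro equalityI subsetI)
    fix T assume "T \<in> (\<lambda>C. fst ` C) ` ?Arb"
    then obtain C where C: "allreach ends q C" "card C = ?n - 1" "T = fst ` C" by blast
    have "card T = ?n - 1" using arb_inj_fst[OF C(1,2)] C(2,3) by (simp add: card_image)
    moreover have "connected_on ends T UNIV" using allreach_connected_fst[OF C(1)] C(3) by simp
    ultimately show "T \<in> spanning_trees ends" by (simp add: spanning_trees_def)
  next
    fix T assume "T \<in> spanning_trees ends"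
    then have T: "card T = ?n - 1" "connected_on ends T UNIV" by (auto simp: spanning_trees_def)
    have "allreach ends q (dF T)" using T(2) connected_iff_allreach[of ends T q] by simp
    then obtain C where C: "C \<subseteq> dF T" "card C = ?n - 1" "inj_on fst C" "allreach ends q C"
      using bfs by blast
    have sub: "fst ` C \<subseteq> T" using C(1) by (auto simp: dF_def)
    have "card (fst ` C) = card T" using C(2,3) T(1) by (simp add: card_image)
    then have "fst ` C = T" using sub by (simp add: card_subset_eq)
    then show "T \<in> (\<lambda>C. fst ` C) ` ?Arb" using C(2,4) by blast
  qed
  show ?thesis using card_image[OF inj] img by simp
qed

lemma arb_exists:
  fixes ends :: "'e::finite \<Rightarrow> 'v::finite \<times> 'v"
  assumes conn: "graph_connected ends"
  shows "{C. allreach ends q C \<and> card C = card (UNIV :: 'v set) - 1} \<noteq> {}"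
proof -
  have "allreach ends q (dF UNIV)" using conn connected_iff_allreach[of ends UNIV q]
    by (simp add: graph_connected_def)
  then obtain C where "card C = card (UNIV :: 'v set) - 1" "allreach ends q C" using bfs by blast
  then show ?thesis by blast
qed

lemma uminus_image_count:
  fixes P :: "'a::finite set \<Rightarrow> bool" and X :: "'a set set"
  assumes "\<And>F. P F \<longleftrightarrow> - F \<in> X"
  shows "card {F. P F} = card X"
proof -
  have "{F. P F} = uminus ` X"
  proof (intro equalityI subsetI)
    fix F assume "F \<in> {F. P F}"
    then have "- F \<in> X" using assms by simp
    then show "F \<in> uminus ` X" by (rule image_eqI[where x="- F", rotated]) simp
  next
    fix F assume "F \<in> uminus ` X"
    then show "F \<in> {F. P F}" using assms by auto
  qed
  moreover have "inj_on uminus X" by (rule inj_onI) simp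
  ultimately show ?thesis by (simp add: card_image)
qed

theorem mainTheorem11:
  fixes ends :: "'e::finite \<Rightarrow> 'v::finite \<times> 'v"
    and q :: 'v
  assumes "loopless ends"
    and "graph_connected ends"
  shows "int (quot_dim TYPE('k::field) (cut_gens_oriented ends q :: ('e \<times> bool, 'k) mpoly set))
           = 2 * int (card (UNIV :: 'e set)) - int (card (UNIV :: 'v set)) + 1
       \<and> multiplicity TYPE('k) (cut_gens_oriented ends q :: ('e \<times> bool, 'k) mpoly set)
           = multiplicity TYPE('k) (cut_gens ends q :: ('e, 'k) mpoly set)
       \<and> multiplicity TYPE('k) (cut_gens ends q :: ('e, 'k) mpoly set)
           = real (card (spanning_trees ends))"
proof -
  note conn = assms(2)
  define n where "n = card (UNIV :: 'v set)"
  define m where "m = card (UNIV :: 'e set)"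
  define Arb where "Arb = {C. allreach ends q C \<and> card C = n - 1}"
  define SSo where "SSo = {oedges_between ends A (- A) | A. connected_cut_side ends A \<and> q \<in> - A}"
  define SSu where "SSu = {fst ` oedges_between ends A (- A) | A. connected_cut_side ends A \<and> q \<in> - A}"
  define kappa where "kappa = card (spanning_trees ends)"
  have cArb: "card Arb = kappa" unfolding Arb_def kappa_def n_def by (rule arb_trees)
  have neArb: "Arb \<noteq> {}" unfolding Arb_def n_def by (rule arb_exists[OF conn])
  have finArb: "finite Arb" by simp
  have "card Arb > 0" using neArb finArb by (simp add: card_gt_0_iff)
  then have kpos: "kappa > 0" using cArb by simp
  have "0 < n" unfolding n_def by (rule finite_UNIV_card_ge_0) simp
  then have n1: "n \<ge> 1" by simp
  have nm: "n - 1 \<le> m"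
  proof -
    obtain C where C: "C \<in> Arb" using neArb by blast
    then have Ca: "allreach ends q C" "card C = n - 1" by (auto simp: Arb_def)
    have "inj_on fst C" using arb_inj_fst[of ends q C] Ca by (simp add: n_def)
    then have "card (fst ` C) = n - 1" using Ca(2) by (simp add: card_image)
    moreover have "card (fst ` C) \<le> m" unfolding m_def by (rule card_mono) simp_all
    ultimately show ?thesis by simp
  qed
  have cardOE: "card (UNIV :: ('e \<times> bool) set) = 2 * m"
  proof -
    have "card ((UNIV :: 'e set) \<times> (UNIV :: bool set)) = card (UNIV :: 'e set) * card (UNIV :: bool set)"
      by (rule card_cartesian_product)
    then have "card (UNIV :: ('e \<times> bool) set) = card (UNIV :: 'e set) * card (UNIV :: bool set)"
      by simp
    then show ?thesis by (simp add: m_def)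
  qed
  define ko where "ko = 2 * m - (n - 1)"
  define ku where "ku = m - (n - 1)"
  have fo: "(\<forall>S\<in>SSo. \<not> S \<subseteq> F) \<longleftrightarrow> allreach ends q (- F)" for F
    unfolding SSo_def by (rule faces_oriented[OF conn])
  have fu: "(\<forall>S\<in>SSu. \<not> S \<subseteq> F) \<longleftrightarrow> connected_on ends (- F) UNIV" for F
    unfolding SSu_def by (rule faces_unoriented[OF conn])
  have Fo_le: "card F \<le> ko" if "F \<in> {F. \<forall>S\<in>SSo. \<not> S \<subseteq> F}" for F
  proof -
    have "allreach ends q (- F)" using that fo by simp
    then have "n - 1 \<le> card (- F)" unfolding n_def by (rule allreach_card)
    moreover have "card (- F) = 2 * m - card F" using card_compl_fin[of F] cardOE by simp
    moreover have "card F \<le> 2 * m" using card_mono[of "UNIV :: ('e \<times> bool) set" F] cardOE by simp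
    ultimately show ?thesis unfolding ko_def by simp
  qed
  have Fo_c: "kappa = card {F \<in> {F. \<forall>S\<in>SSo. \<not> S \<subseteq> F}. card F = ko}"
  proof -
    have "card {F. (\<forall>S\<in>SSo. \<not> S \<subseteq> F) \<and> card F = ko} = card Arb"
    proof (rule uminus_image_count)
      fix F :: "('e \<times> bool) set"
      have c1: "card (- F) = 2 * m - card F" using card_compl_fin[of F] cardOE by simp
      have c2: "card F \<le> 2 * m" using card_mono[of "UNIV :: ('e \<times> bool) set" F] cardOE by simp
      have "card F = ko \<longleftrightarrow> card (- F) = n - 1" using c1 c2 nm unfolding ko_def by auto
      then show "((\<forall>S\<in>SSo. \<not> S \<subseteq> F) \<and> card F = ko) \<longleftrightarrow> - F \<in> Arb"
        using fo[of F] by (simp add: Arb_def)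
    qed
    then show ?thesis using cArb by simp
  qed
  have Fu_le: "card F \<le> ku" if "F \<in> {F. \<forall>S\<in>SSu. \<not> S \<subseteq> F}" for F
  proof -
    have "connected_on ends (- F) UNIV" using that fu by simp
    then have "n - 1 \<le> card (- F)" unfolding n_def by (rule connected_card)
    moreover have "card (- F) = m - card F" using card_compl_fin[of F] by (simp add: m_def)
    moreover have "card F \<le> m" using card_mono[of "UNIV :: 'e set" F] by (simp add: m_def)
    ultimately show ?thesis unfolding ku_def by simp
  qed
  have Fu_c: "kappa = card {F \<in> {F. \<forall>S\<in>SSu. \<not> S \<subseteq> F}. card F = ku}"
  proof -
    have "card {F. (\<forall>S\<in>SSu. \<not> S \<subseteq> F) \<and> card F = ku} = card (spanning_trees ends)"
    proof (rule uminus_image_count)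
      fix F :: "'e set"
      have c1: "card (- F) = m - card F" using card_compl_fin[of F] by (simp add: m_def)
      have c2: "card F \<le> m" using card_mono[of "UNIV :: 'e set" F] by (simp add: m_def)
      have "card F = ku \<longleftrightarrow> card (- F) = n - 1" using c1 c2 nm unfolding ku_def by auto
      then show "((\<forall>S\<in>SSu. \<not> S \<subseteq> F) \<and> card F = ku) \<longleftrightarrow> - F \<in> spanning_trees ends"
        using fu[of F] by (auto simp: spanning_trees_def n_def)
    qed
    then show ?thesis by (simp add: kappa_def)
  qed
  have O: "quot_dim TYPE('k) ((\<lambda>S. Poly_Mapping.single (sqmono S) (1::'k)) ` SSo) = ko
     \<and> multiplicity TYPE('k) ((\<lambda>S. Poly_Mapping.single (sqmono S) (1::'k)) ` SSo) = real kappa"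
    by (rule samuel_main[OF Fo_le Fo_c kpos])
  have U: "quot_dim TYPE('k) ((\<lambda>S. Poly_Mapping.single (sqmono S) (1::'k)) ` SSu) = ku
     \<and> multiplicity TYPE('k) ((\<lambda>S. Poly_Mapping.single (sqmono S) (1::'k)) ` SSu) = real kappa"
    by (rule samuel_main[OF Fu_le Fu_c kpos])
  have go: "(cut_gens_oriented ends q :: ('e \<times> bool, 'k) mpoly set) = (\<lambda>S. Poly_Mapping.single (sqmono S) (1::'k)) ` SSo"
    unfolding SSo_def by (rule gens_oriented)
  have gu: "(cut_gens ends q :: ('e, 'k) mpoly set) = (\<lambda>S. Poly_Mapping.single (sqmono S) (1::'k)) ` SSu"
    unfolding SSu_def by (rule gens_unoriented)
  have "int ko = 2 * int m - int n + 1" using nm n1 unfolding ko_def by linarith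
  then show ?thesis using O U unfolding go gu by (simp add: m_def n_def kappa_def)
qed

end
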